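(* Let $\mathcal{B}$ be a smooth real Banach space with dual $\mathcal{B}^*$, let $\nu_j\in\mathcal{B}^*$, $j\in\mathbb{N}_m$, be linearly independent and let $\mathbf{y}\in\mathbb{R}^m$. Then $\hat f\in\mathcal{B}$ is a solution of the minimum norm interpolation problem with data $\mathbf{y}$ if and only if $\hat f\in\mathcal{M}_{\mathbf{y}}$ and there exist $c_j\in\mathbb{R}$, $j\in\mathbb{N}_m$, such that $\mathcal{G}(\hat f)=\sum_{j\in\mathbb{N}_m}c_j\nu_j$.
   Context: $\mathcal{B}$ is a real Banach space with dual $\mathcal{B}^*$ and pairing $\langle\nu,f\rangle_{\mathcal{B}}:=\nu(f)$; $\mathbb{N}_m:=\{1,\dots,m\}$; $\mathcal{L}(f):=[\langle\nu_j,f\rangle_{\mathcal{B}}:j\in\mathbb{N}_m]$, $\mathcal{M}_{\mathbf{y}}:=\{f\in\mathcal{B}:\mathcal{L}(f)=\mathbf{y}\}$; a solution of the minimum norm interpolation problem with data $\mathbf{y}$ is an $\hat f\in\mathcal{M}_{\mathbf{y}}$ with $\|\hat f\|_{\mathcal{B}}=\inf\{\|f\|_{\mathcal{B}}:f\in\mathcal{M}_{\mathbf{y}}\}$. The norm is Gâteaux differentiable at $f\neq0$ if for all $h\in\mathcal{B}$ the limit $\lim_{t\to0}(\|f+th\|_{\mathcal{B}}-\|f\|_{\mathcal{B}})/t$ exists; then $\mathcal{G}(f)\in\mathcal{B}^*$ denotes the functional with $\langle\mathcal{G}(f),h\rangle_{\mathcal{B}}$ equal to this limit (the Gâteaux derivative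 of the norm at $f$). By convention $\mathcal{G}(0):=0$. $\mathcal{B}$ is smooth if its norm is Gâteaux differentiable at every nonzero $f$. *)

theory Defs
  imports "HOL-Analysis.Analysis"
begin

definition norm_gateaux_differentiable_at :: "'a::real_normed_vector \<Rightarrow> bool" where
  "norm_gateaux_differentiable_at f \<longleftrightarrow>
     (\<forall>h. \<exists>L. ((\<lambda>t::real. (norm (f + t *\<^sub>R h) - norm f) / t) \<longlongrightarrow> L) (at 0))"

definition smooth_space :: "'a::real_normed_vector itself \<Rightarrow> bool" where
  "smooth_space TYPE('a) \<longleftrightarrow> (\<forall>f::'a. f \<noteq> 0 \<longrightarrow> norm_gateaux_differentiable_at f)"

text \<open>Gateaux derivative of the norm, with the convention G(0) = 0.\<close>
definition norm_gateaux :: "'a::real_normed_vector \<Rightarrow> ('a \<Rightarrow> real)" where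
  "norm_gateaux f = (\<lambda>h. if f = 0 then 0
      else Lim (at (0::real)) (\<lambda>t. (norm (f + t *\<^sub>R h) - norm f) / t))"

definition interp_set :: "nat \<Rightarrow> (nat \<Rightarrow> 'a \<Rightarrow> real) \<Rightarrow> (nat \<Rightarrow> real) \<Rightarrow> 'a set" where
  "interp_set m \<nu> y = {f. \<forall>j\<in>{1..m}. \<nu> j f = y j}"

definition min_norm_interp_solution ::
  "nat \<Rightarrow> (nat \<Rightarrow> 'a::real_normed_vector \<Rightarrow> real) \<Rightarrow> (nat \<Rightarrow> real) \<Rightarrow> 'a \<Rightarrow> bool" where
  "min_norm_interp_solution m \<nu> y fh \<longleftrightarrow>
     fh \<in> interp_set m \<nu> y \<and> norm fh = Inf (norm ` interp_set m \<nu> y)"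

end

theory Submission
  imports Defs
begin

definition qq :: "'a::real_normed_vector \<Rightarrow> 'a \<Rightarrow> real \<Rightarrow> real" where
  "qq f h t = (norm (f + t *\<^sub>R h) - norm f) / t"

lemma gat_tendsto:
  assumes "norm_gateaux_differentiable_at f" "f \<noteq> 0"
  shows "(qq f h \<longlongrightarrow> norm_gateaux f h) (at 0)"
proof -
  obtain L where L: "((\<lambda>t::real. (norm (f + t *\<^sub>R h) - norm f) / t) \<longlongrightarrow> L) (at 0)"
    using assms(1) unfolding norm_gateaux_differentiable_at_def by blast
  have "norm_gateaux f h = L" unfolding norm_gateaux_def using assms(2) tendsto_Lim[OF _ L] by simp
  thus ?thesis using L unfolding qq_def[abs_def] by simp
qed

lemma compose_scale:
  assumes "(g \<longlongrightarrow> L) (at (0::real))" "a \<noteq> 0"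
  shows "((\<lambda>t. g (a * t)) \<longlongrightarrow> L) (at 0)"
proof -
  have f: "((\<lambda>t::real. a * t) \<longlongrightarrow> 0) (at 0)" by (auto intro!: tendsto_eq_intros)
  have "\<exists>d>0. \<forall>x. x \<noteq> 0 \<and> norm (x - 0) < d \<longrightarrow> a * x \<noteq> 0" using assms(2) by (intro exI[of _ 1]) auto
  from LIM_compose2[OF f assms(1) this] show ?thesis by (simp add: o_def)
qed

lemma qq_scale: "a \<noteq> 0 \<Longrightarrow> qq f (a *\<^sub>R h) t = a * qq f h (a * t)"
  by (cases "t = 0") (simp_all add: qq_def field_simps)

lemma gat_scale:
  assumes "norm_gateaux_differentiable_at f" "f \<noteq> 0"
  shows "norm_gateaux f (a *\<^sub>R h) = a * norm_gateaux f h"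
proof (cases "a = 0")
  case True
  have "qq f 0 = (\<lambda>_. 0)" by (simp add: qq_def fun_eq_iff)
  hence "(qq f 0 \<longlongrightarrow> 0) (at 0)" by simp
  with gat_tendsto[OF assms, of 0] True show ?thesis
    using tendsto_unique[of "at (0::real)"] by auto
next
  case False
  have "((\<lambda>t. a * qq f h (a * t)) \<longlongrightarrow> a * norm_gateaux f h) (at 0)"
    by (intro tendsto_mult tendsto_const compose_scale gat_tendsto assms False)
  moreover have "qq f (a *\<^sub>R h) = (\<lambda>t. a * qq f h (a * t))" by (rule ext) (rule qq_scale[OF False])
  ultimately have "(qq f (a *\<^sub>R h) \<longlongrightarrow> a * norm_gateaux f h) (at 0)" by simp
  with gat_tendsto[OF assms, of "a *\<^sub>R h"] show ?thesis
    using tendsto_unique[of "at (0::real)"] by auto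
qed

lemma qq_sub: "t > 0 \<Longrightarrow> qq f (h + k) t \<le> qq f h (2*t) + qq f k (2*t)"
proof -
  assume t: "t > 0"
  have "f + t *\<^sub>R (h + k) = (1/2) *\<^sub>R (f + (2*t) *\<^sub>R h) + (1/2) *\<^sub>R (f + (2*t) *\<^sub>R k)"
  proof -
    have "(1/2::real) *\<^sub>R f + (1/2) *\<^sub>R f = f" by (simp flip: scaleR_add_left)
    thus ?thesis by (simp add: algebra_simps)
  qed
  hence "norm (f + t *\<^sub>R (h + k)) \<le> (1/2) * norm (f + (2*t) *\<^sub>R h) + (1/2) * norm (f + (2*t) *\<^sub>R k)"
    by (metis (no_types, lifting) norm_triangle_le norm_scaleR abs_of_pos zero_less_divide_iff
        zero_less_one zero_less_numeral order_refl)
  hence "2 * norm (f + t *\<^sub>R (h + k)) - 2 * norm f \<le> (norm (f + (2*t) *\<^sub>R h) - norm f) + (norm (f + (2*t) *\<^sub>R k) - norm f)"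
    by simp
  hence "(2 * norm (f + t *\<^sub>R (h + k)) - 2 * norm f) / (2*t) \<le> ((norm (f + (2*t) *\<^sub>R h) - norm f) + (norm (f + (2*t) *\<^sub>R k) - norm f)) / (2*t)"
    using t by (intro divide_right_mono) auto
  moreover have "(2 * norm (f + t *\<^sub>R (h + k)) - 2 * norm f) / (2*t) = (norm (f + t *\<^sub>R (h + k)) - norm f)/t"
    using t by (simp add: field_simps)
  ultimately show ?thesis using t unfolding qq_def add_divide_distrib by simp
qed

lemma gat_sub:
  assumes "norm_gateaux_differentiable_at f" "f \<noteq> 0"
  shows "norm_gateaux f (h + k) \<le> norm_gateaux f h + norm_gateaux f k"
proof -
  have "((\<lambda>t. qq f h (2*t) + qq f k (2*t)) \<longlongrightarrow> norm_gateaux f h + norm_gateaux f k) (at 0)"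
    by (intro tendsto_add compose_scale gat_tendsto assms) auto
  hence A: "((\<lambda>t. qq f h (2*t) + qq f k (2*t)) \<longlongrightarrow> norm_gateaux f h + norm_gateaux f k) (at_right 0)"
    by (rule tendsto_mono[OF at_le, rotated]) simp
  have B: "(qq f (h+k) \<longlongrightarrow> norm_gateaux f (h+k)) (at_right 0)"
    by (rule tendsto_mono[OF at_le gat_tendsto[OF assms]]) simp
  have "\<forall>\<^sub>F t in at_right 0. qq f (h+k) t \<le> qq f h (2*t) + qq f k (2*t)"
    by (auto simp: eventually_at_right_less intro: qq_sub eventually_mono[OF eventually_at_right_less])
  thus ?thesis using tendsto_le[OF _ A B] by simp
qed

lemma gat_linear:
  assumes "norm_gateaux_differentiable_at f" "f \<noteq> 0"
  shows "linear (norm_gateaux f)"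
proof
  fix h k
  have 1: "norm_gateaux f (h + k) \<le> norm_gateaux f h + norm_gateaux f k" by (rule gat_sub[OF assms])
  have "norm_gateaux f ((-1) *\<^sub>R (h + k)) \<le> norm_gateaux f ((-1) *\<^sub>R h) + norm_gateaux f ((-1) *\<^sub>R k)"
    using gat_sub[OF assms, of "(-1) *\<^sub>R h" "(-1) *\<^sub>R k"] by (simp add: algebra_simps)
  hence 2: "- norm_gateaux f (h + k) \<le> - norm_gateaux f h - norm_gateaux f k"
    unfolding gat_scale[OF assms] by simp
  from 1 2 show "norm_gateaux f (h + k) = norm_gateaux f h + norm_gateaux f k" by simp
next
  fix r h show "norm_gateaux f (r *\<^sub>R h) = r *\<^sub>R norm_gateaux f h" by (simp add: gat_scale[OF assms])
qed

lemma right_limit: "(g \<longlongrightarrow> L) (at (0::real)) \<Longrightarrow> (g \<longlongrightarrow> L) (at_right 0)"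
  by (rule tendsto_mono[OF at_le]) simp_all
lemma left_limit: "(g \<longlongrightarrow> L) (at (0::real)) \<Longrightarrow> (g \<longlongrightarrow> L) (at_left 0)"
  by (rule tendsto_mono[OF at_le]) simp_all

lemma span_lemma:
  assumes "finite S" "\<forall>j\<in>S. linear (\<nu> j)" "linear G" "\<forall>h. (\<forall>j\<in>S. \<nu> j h = 0) \<longrightarrow> G h = (0::real)"
  shows "\<exists>c. \<forall>h. G h = (\<Sum>j\<in>S. c j * \<nu> j h)"
  using assms
proof (induction S arbitrary: G rule: finite_induct)
  case empty
  then show ?case by simp
next
  case (insert a S)
  have la: "linear (\<nu> a)" and lS: "\<forall>j\<in>S. linear (\<nu> j)" using insert.prems by auto
  show ?case
  proof (cases "\<forall>e. (\<forall>j\<in>S. \<nu> j e = 0) \<longrightarrow> \<nu> a e = 0")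
    case True
    have "\<forall>h. (\<forall>j\<in>S. \<nu> j h = 0) \<longrightarrow> G h = 0" using True insert.prems(3) by auto
    from insert.IH[OF lS insert.prems(2) this] obtain c where c: "\<forall>h. G h = (\<Sum>j\<in>S. c j * \<nu> j h)" by blast
    have "\<forall>h. G h = (\<Sum>j\<in>insert a S. (c(a:=0)) j * \<nu> j h)"
    proof
      fix h
      have "(\<Sum>j\<in>S. (c(a:=0)) j * \<nu> j h) = (\<Sum>j\<in>S. c j * \<nu> j h)"
        using insert.hyps(2) by (intro sum.cong) auto
      thus "G h = (\<Sum>j\<in>insert a S. (c(a:=0)) j * \<nu> j h)" using c insert.hyps by simp
    qed
    thus ?thesis by blast
  next
    case False
    then obtain e0 where e0: "\<forall>j\<in>S. \<nu> j e0 = 0" "\<nu> a e0 \<noteq> 0" by blast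
    define e where "e = (1 / \<nu> a e0) *\<^sub>R e0"
    have eS: "\<forall>j\<in>S. \<nu> j e = 0" using e0 lS by (simp add: e_def linear_scale)
    have ea: "\<nu> a e = 1" using e0 la by (simp add: e_def linear_scale)
    define G' where "G' = (\<lambda>h. G h - G e * \<nu> a h)"
    have lG': "linear G'" unfolding G'_def
      using insert.prems(2) la by (intro linearI) (auto simp: linear_add linear_scale algebra_simps)
    have "\<forall>h. (\<forall>j\<in>S. \<nu> j h = 0) \<longrightarrow> G' h = 0"
    proof (intro allI impI)
      fix h assume h: "\<forall>j\<in>S. \<nu> j h = 0"
      define h' where "h' = h - \<nu> a h *\<^sub>R e"
      have "\<forall>j\<in>insert a S. \<nu> j h' = 0"
        using h eS ea la lS by (auto simp: h'_def linear_diff linear_scale)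
      hence "G h' = 0" using insert.prems(3) by blast
      hence "G h = \<nu> a h * G e" using insert.prems(2)
        by (simp add: h'_def linear_diff linear_scale)
      thus "G' h = 0" by (simp add: G'_def)
    qed
    from insert.IH[OF lS lG' this] obtain c where c: "\<forall>h. G' h = (\<Sum>j\<in>S. c j * \<nu> j h)" by blast
    have "\<forall>h. G h = (\<Sum>j\<in>insert a S. (c(a:=G e)) j * \<nu> j h)"
    proof
      fix h
      have "(\<Sum>j\<in>S. (c(a:=G e)) j * \<nu> j h) = (\<Sum>j\<in>S. c j * \<nu> j h)"
        using insert.hyps(2) by (intro sum.cong) auto
      thus "G h = (\<Sum>j\<in>insert a S. (c(a:=G e)) j * \<nu> j h)"
        using c[rule_format, of h] insert.hyps by (simp add: G'_def)
    qed
    thus ?thesis by blast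
  qed
qed

theorem mainTheorem3:
  fixes \<nu> :: "nat \<Rightarrow> 'a::banach \<Rightarrow> real" and m :: nat and y :: "nat \<Rightarrow> real" and fh :: 'a
  assumes smooth: "smooth_space TYPE('a)"
    and dual: "\<forall>j\<in>{1..m}. bounded_linear (\<nu> j)"
    and lin_indep: "\<forall>c::nat \<Rightarrow> real. (\<forall>f. (\<Sum>j\<in>{1..m}. c j * \<nu> j f) = 0)
                       \<longrightarrow> (\<forall>j\<in>{1..m}. c j = 0)"
  shows "min_norm_interp_solution m \<nu> y fh \<longleftrightarrow>
           fh \<in> interp_set m \<nu> y \<and>
           (\<exists>c::nat \<Rightarrow> real. norm_gateaux fh = (\<lambda>h. \<Sum>j\<in>{1..m}. c j * \<nu> j h))"
proof -
  define M where "M = interp_set m \<nu> y"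
  have lin: "\<forall>j\<in>{1..m}. linear (\<nu> j)" using dual bounded_linear.linear by blast
  have memM: "g \<in> M \<longleftrightarrow> (\<forall>j\<in>{1..m}. \<nu> j g = y j)" for g
    by (simp add: M_def interp_set_def)
  have bdd: "bdd_below (norm ` M)" by (rule bdd_belowI[of _ 0]) auto
  have gd: "fh \<noteq> 0 \<Longrightarrow> norm_gateaux_differentiable_at fh"
    using smooth by (simp add: smooth_space_def)
  have G0: "norm_gateaux (0::'a) = (\<lambda>h. 0)" by (simp add: norm_gateaux_def fun_eq_iff)
  show ?thesis unfolding min_norm_interp_solution_def M_def[symmetric]
  proof
    assume A: "fh \<in> M \<and> norm fh = Inf (norm ` M)"
    have min: "norm fh \<le> norm g" if "g \<in> M" for g
      using A cInf_lower[OF imageI[OF that] bdd] by simp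
    show "fh \<in> M \<and> (\<exists>c. norm_gateaux fh = (\<lambda>h. \<Sum>j\<in>{1..m}. c j * \<nu> j h))"
    proof (cases "fh = 0")
      case True
      then show ?thesis using A G0 by (intro conjI exI[of _ "\<lambda>_. 0"]) auto
    next
      case False
      note gdf = gd[OF False]
      have ker: "norm_gateaux fh h = 0" if h: "\<forall>j\<in>{1..m}. \<nu> j h = 0" for h
      proof -
        have "fh + t *\<^sub>R h \<in> M" for t
          using A h lin by (auto simp: memM linear_add linear_scale)
        hence le: "norm fh \<le> norm (fh + t *\<^sub>R h)" for t using min by blast
        have lim: "(qq fh h \<longlongrightarrow> norm_gateaux fh h) (at 0)" by (rule gat_tendsto[OF gdf False])
        have "\<forall>\<^sub>F t in at_right 0. 0 \<le> qq fh h t"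
          using le by (auto simp: qq_def eventually_at_right_less intro: eventually_mono[OF eventually_at_right_less])
        hence 1: "0 \<le> norm_gateaux fh h" using tendsto_lowerbound[OF right_limit[OF lim]] by simp
        have "\<forall>\<^sub>F t in at_left 0. qq fh h t \<le> 0"
        proof (rule eventually_mono[OF eventually_at_left_real[of "-1" "0::real", OF neg_less_0_iff_less[THEN iffD2, OF zero_less_one]]])
          fix t :: real assume "t \<in> {-1<..<0}"
          hence "t < 0" by simp
          thus "qq fh h t \<le> 0" using le[of t] by (simp add: qq_def divide_nonneg_neg)
        qed
        hence 2: "norm_gateaux fh h \<le> 0" using tendsto_upperbound[OF left_limit[OF lim]] by simp
        from 1 2 show ?thesis by simp
      qed
      have "\<exists>c. \<forall>h. norm_gateaux fh h = (\<Sum>j\<in>{1..m}. c j * \<nu> j h)"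
        by (rule span_lemma) (use lin gat_linear[OF gdf False] ker in auto)
      then show ?thesis using A by auto
    qed
  next
    assume B: "fh \<in> M \<and> (\<exists>c. norm_gateaux fh = (\<lambda>h. \<Sum>j\<in>{1..m}. c j * \<nu> j h))"
    then obtain c where c: "norm_gateaux fh = (\<lambda>h. \<Sum>j\<in>{1..m}. c j * \<nu> j h)" by blast
    have "Inf (norm ` M) = norm fh"
    proof (cases "fh = 0")
      case True
      then show ?thesis using B by (intro cInf_eq_minimum) auto
    next
      case False
      note gdf = gd[OF False]
      have "\<forall>\<^sub>F t in at (0::real). norm fh = qq fh fh t"
        unfolding eventually_at
      proof (intro exI[of _ 1] conjI ballI impI)
        fix t :: real assume t: "t \<noteq> 0 \<and> dist t 0 < 1"
        have "fh + t *\<^sub>R fh = (1 + t) *\<^sub>R fh" by (simp add: algebra_simps)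
        moreover have "1 + t > 0" using t by (auto simp: dist_real_def)
        ultimately have "norm (fh + t *\<^sub>R fh) = (1 + t) * norm fh" by simp
        thus "norm fh = qq fh fh t" using t by (simp add: qq_def field_simps)
      qed simp
      hence "(qq fh fh \<longlongrightarrow> norm fh) (at 0)" by (rule Lim_transform_eventually[OF tendsto_const])
      hence Gf: "norm_gateaux fh fh = norm fh"
        using gat_tendsto[OF gdf False] tendsto_unique[of "at (0::real)"] by auto
      have Gle: "norm_gateaux fh g \<le> norm g" for g
      proof -
        have "\<forall>\<^sub>F t in at_right 0. qq fh g t \<le> norm g"
        proof (rule eventually_mono[OF eventually_at_right_less])
          fix t :: real assume t: "0 < t"
          have "norm (fh + t *\<^sub>R g) \<le> norm fh + t * norm g"
            using norm_triangle_ineq[of fh "t *\<^sub>R g"] t by simp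
          thus "qq fh g t \<le> norm g" using t by (simp add: qq_def divide_le_eq algebra_simps)
        qed
        thus ?thesis using tendsto_upperbound[OF right_limit[OF gat_tendsto[OF gdf False]]] by simp
      qed
      show ?thesis
      proof (rule cInf_eq_minimum)
        show "norm fh \<in> norm ` M" using B by auto
      next
        fix x assume "x \<in> norm ` M"
        then obtain g where g: "g \<in> M" "x = norm g" by blast
        have "norm_gateaux fh g = norm_gateaux fh fh"
          unfolding c using g(1) B by (simp add: memM)
        thus "norm fh \<le> x" using Gf Gle[of g] g by simp
      qed
    qed
    thus "fh \<in> M \<and> norm fh = Inf (norm ` M)" using B by simp
  qed
qed

end
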